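(* Let $z\ge1$ be an integer and $0<\overline\delta\le\tfrac12$. Consider the perfect binary tree of depth $z-1$: its nodes at depth $y\in\{0,\dots,z-1\}$ are the binary strings $v=(j_1,\dots,j_y)$ (the root is the empty string), and the ancestors of $v$ are its prefixes. Let $(B_v)_v$ be independent $\{0,1\}$-valued random variables with $\Pr(B_v=1)\le\overline\delta^{\,2^{z-y(v)}}$, where $y(v)$ is the depth of $v$. Define $X_v=2$ if $B_u=1$ for some strict ancestor $u$ of $v$; $X_v=1$ if $B_u=0$ for all strict ancestors $u$ of $v$ and $B_v=1$; and $X_v=0$ otherwise. For a set $\overline T$ of nodes define its node weight $W(\overline T)$ as the number of leaves (nodes of depth $z-1$) having an ancestor-or-self in $\overline T$. Let $\overline T$ be a set of nodes no two distinct elements of which are in ancestor/descendant relation. Then $$\Pr\bigl(X_v\in\{1,2\}\ \text{for all }v\in\overline T\bigr)\le4\cdot4^{|\overline T|}\,\overline\delta^{\,2W(\overline T)}.$$ In particular, if $\overline T$ consists of leaves only, then $$\Pr\bigl(X_v\in\{1,2\}\ \text{for all }v\in\overline T\bigr)\le(2\overline\delta)^{2|\overline T|}.$$ *)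

theory Defs
  imports "HOL-Probability.Probability" "HOL-Library.Sublist"
begin

text \<open>Nodes of the perfect binary tree of depth z-1: binary strings of length < z.
  Ancestors of a node are its prefixes; the depth of v is length v.\<close>
definition tree_nodes :: "nat \<Rightarrow> bool list set" where
  "tree_nodes z = {v. length v < z}"

definition tree_leaves :: "nat \<Rightarrow> bool list set" where
  "tree_leaves z = {v. length v = z - 1}"

definition Xval :: "(bool list \<Rightarrow> 'a \<Rightarrow> bool) \<Rightarrow> 'a \<Rightarrow> bool list \<Rightarrow> nat" where
  "Xval B \<omega> v = (if \<exists>u. strict_prefix u v \<and> B u \<omega> then 2
                  else if B v \<omega> then 1 else 0)"

definition node_weight :: "nat \<Rightarrow> bool list set \<Rightarrow> nat" where
  "node_weight z T = card {l \<in> tree_leaves z. \<exists>u\<in>T. prefix u l}"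

definition antichain_nodes :: "bool list set \<Rightarrow> bool" where
  "antichain_nodes T \<longleftrightarrow> (\<forall>u\<in>T. \<forall>v\<in>T. u \<noteq> v \<longrightarrow> \<not> prefix u v)"

end

theory Submission
  imports Defs
begin

locale tsetup = prob_space M for M :: "'a measure" +
  fixes B :: "bool list \<Rightarrow> 'a \<Rightarrow> bool" and z :: nat and x :: real
  assumes x0: "0 \<le> x" and x14: "x \<le> 1/4"
  and indep: "indep_vars (\<lambda>_. count_space UNIV) B (tree_nodes z)"
  and pb: "\<And>v. v\<in>tree_nodes z \<Longrightarrow> prob {\<omega>\<in>space M. B v \<omega>} \<le> x ^ (2 ^ (z - 1 - length v))"
begin

definition A where "A u = {\<omega>\<in>space M. B u \<omega>}"
definition E where "E r T = {\<omega>\<in>space M. \<forall>v\<in>T. \<exists>u. prefix r u \<and> prefix u v \<and> B u \<omega>}"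
definition sub :: "bool list \<Rightarrow> bool list set" where "sub r = {v. prefix r v \<and> length v < z}"
definition ee where "ee d = (\<Sum>i<d. x ^ (2 ^ (z - 1 - i)))"

lemma A_ev: "u \<in> tree_nodes z \<Longrightarrow> A u \<in> events"
proof -
  assume u: "u \<in> tree_nodes z"
  have "random_variable (count_space UNIV) (B u)" using indep u unfolding indep_vars_def by auto
  from measurable_sets[OF this, of "{True}"] show ?thesis unfolding A_def
    by (simp add: vimage_def Int_def conj_commute)
qed

lemma A_sp: "A u \<subseteq> space M" unfolding A_def by auto

lemma E_eq: "T \<noteq> {} \<Longrightarrow> E r T = (\<Inter>v\<in>T. \<Union>u\<in>{u\<in>set (prefixes v). prefix r u}. A u)"
  unfolding E_def A_def by auto

lemma finite_sub: "finite (sub r)"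
proof -
  have "sub r \<subseteq> (\<Union>n<z. {xs. set xs \<subseteq> (UNIV::bool set) \<and> length xs = n})" unfolding sub_def by auto
  moreover have "finite (\<Union>n<z. {xs. set xs \<subseteq> (UNIV::bool set) \<and> length xs = n})"
    by (intro finite_UN_I finite_lists_length_eq) auto
  ultimately show ?thesis by (rule finite_subset)
qed

lemma sub_nodes: "sub r \<subseteq> tree_nodes z" unfolding sub_def tree_nodes_def by auto

lemma fin_pref: "finite {u. prefix u v \<and> P u}"
  by (rule finite_subset[of _ "set (prefixes v)"]) auto

lemma E_sigma:
  assumes "finite T" "T \<noteq> {}" "T \<subseteq> sub r" "sub r \<subseteq> U"
  shows "E r T \<in> sigma_sets (space M) (\<Union>u\<in>U. {A u})"
proof -
  interpret S: sigma_algebra "space M" "sigma_sets (space M) (\<Union>u\<in>U. {A u})"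
    by (rule sigma_algebra_sigma_sets) (auto simp: A_def)
  have "(\<Inter>v\<in>T. \<Union>u\<in>{u\<in>set (prefixes v). prefix r u}. A u) \<in> sigma_sets (space M) (\<Union>u\<in>U. {A u})"
  proof (intro S.finite_INT S.finite_UN assms)
    fix v u assume v: "v \<in> T" and u: "u \<in> {u\<in>set (prefixes v). prefix r u}"
    then have "u \<in> sub r" using assms(3) prefix_length_le[of u v] unfolding sub_def by auto
    then show "A u \<in> sigma_sets (space M) (\<Union>u\<in>U. {A u})" using assms(4) by auto
  qed (auto simp: fin_pref)
  then show ?thesis using E_eq assms(2) by simp
qed

lemma E_ev: assumes "finite T" "T \<subseteq> sub r" shows "E r T \<in> events"
proof (cases "T = {}")
  case True then show ?thesis unfolding E_def by simp
next
  case False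
  have "sigma_sets (space M) (\<Union>u\<in>sub r. {A u}) \<subseteq> events"
    by (rule sets.sigma_sets_subset) (use A_ev sub_nodes in auto)
  with E_sigma[OF assms(1) False assms(2) order_refl] show ?thesis by auto
qed

lemma sub_disj: "sub (r@[True]) \<inter> sub (r@[False]) = {}"
  unfolding sub_def by (auto simp: prefix_def)

lemma indep_children:
  assumes "\<And>j. finite (TT j)" "\<And>j. TT j \<noteq> {}" "\<And>j. TT j \<subseteq> sub (r@[j])"
  shows "prob (E (r@[False]) (TT False) \<inter> E (r@[True]) (TT True))
     = prob (E (r@[False]) (TT False)) * prob (E (r@[True]) (TT True))"
proof -
  have i1: "indep_sets (\<lambda>i. sigma_sets (space M) { B i -` X \<inter> space M | X. X \<in> sets (count_space UNIV)}) (tree_nodes z)"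
    using indep unfolding indep_vars_def by auto
  have i2: "indep_sets (\<lambda>u. {A u}) (\<Union>j. sub (r@[j]))"
  proof (rule indep_sets_mono[OF i1])
    show "(\<Union>j. sub (r@[j])) \<subseteq> tree_nodes z" using sub_nodes by auto
    fix u
    have "A u = B u -` {True} \<inter> space M" unfolding A_def by auto
    then show "{A u} \<subseteq> sigma_sets (space M) { B u -` X \<inter> space M | X. X \<in> sets (count_space UNIV)}"
      by auto
  qed
  have i3: "indep_sets (\<lambda>j. sigma_sets (space M) (\<Union>u\<in>sub (r@[j]). {A u})) UNIV"
  proof (rule indep_sets_collect_sigma)
    show "indep_sets (\<lambda>u. {A u}) (\<Union>j\<in>UNIV. sub (r@[j]))" using i2 by simp
    show "disjoint_family_on (\<lambda>j. sub (r@[j])) UNIV"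
      unfolding disjoint_family_on_def using sub_disj[of r] by (auto simp: UNIV_bool)
  qed (auto simp: Int_stable_def)
  have "prob (\<Inter>j\<in>UNIV. E (r@[j]) (TT j)) = (\<Prod>j\<in>UNIV. prob (E (r@[j]) (TT j)))"
    by (rule indep_setsD[OF i3]) (auto intro!: E_sigma assms)
  then show ?thesis by (simp add: UNIV_bool Int_commute)
qed

lemma pref_step: "prefix r u \<Longrightarrow> u \<noteq> r \<Longrightarrow> prefix u v \<Longrightarrow> prefix (r@[b]) v \<Longrightarrow> prefix (r@[b]) u"
proof -
  assume a: "prefix r u" "u \<noteq> r" "prefix u v" "prefix (r@[b]) v"
  obtain t where t: "u = r @ t" using a(1) unfolding prefix_def by auto
  with a(2) obtain c s where cs: "t = c # s" by (cases t) auto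
  obtain w where w: "v = u @ w" using a(3) unfolding prefix_def by auto
  obtain w' where w': "v = r @ [b] @ w'" using a(4) unfolding prefix_def by auto
  from t cs w w' have "c = b" by simp
  then show ?thesis using t cs by simp
qed

lemma E_mono: "T' \<subseteq> T \<Longrightarrow> E r T \<subseteq> E r T'" unfolding E_def by auto

lemma E_child: "T \<subseteq> sub (r@[b]) \<Longrightarrow> E r T \<subseteq> A r \<union> E (r@[b]) T"
proof
  fix \<omega> assume T: "T \<subseteq> sub (r@[b])" and w: "\<omega> \<in> E r T"
  show "\<omega> \<in> A r \<union> E (r@[b]) T"
  proof (cases "B r \<omega>")
    case True then show ?thesis using w unfolding E_def A_def by auto
  next
    case False
    have "\<exists>u. prefix (r@[b]) u \<and> prefix u v \<and> B u \<omega>" if v: "v \<in> T" for v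
    proof -
      obtain u where u: "prefix r u" "prefix u v" "B u \<omega>" using w v unfolding E_def by auto
      have "u \<noteq> r" using u False by auto
      moreover have "prefix (r@[b]) v" using T v unfolding sub_def by auto
      ultimately have "prefix (r@[b]) u" using pref_step[OF u(1) _ u(2)] by simp
      then show ?thesis using u by blast
    qed
    then show ?thesis using w unfolding E_def by auto
  qed
qed

lemma finite_leaves: "finite (tree_leaves z)"
proof -
  have "tree_leaves z = {xs. set xs \<subseteq> (UNIV::bool set) \<and> length xs = z - 1}"
    unfolding tree_leaves_def by auto
  moreover have "finite {xs. set xs \<subseteq> (UNIV::bool set) \<and> length xs = z - 1}"
    by (rule finite_lists_length_eq) simp
  ultimately show ?thesis by simp
qed

lemma nw_le:
  assumes "T \<subseteq> sub r" "length r < z"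
  shows "node_weight z T \<le> 2 ^ (z - 1 - length r)"
proof -
  let ?S = "{s. set s \<subseteq> (UNIV::bool set) \<and> length s = z - 1 - length r}"
  have finS: "finite ?S" by (rule finite_lists_length_eq) simp
  have "{l \<in> tree_leaves z. \<exists>u\<in>T. prefix u l} \<subseteq> (\<lambda>s. r @ s) ` ?S"
  proof
    fix l assume "l \<in> {l \<in> tree_leaves z. \<exists>u\<in>T. prefix u l}"
    then obtain u where l: "length l = z - 1" "u \<in> T" "prefix u l" unfolding tree_leaves_def by auto
    then have "prefix r u" using assms(1) unfolding sub_def by auto
    then have "prefix r l" using l(3) by (rule prefix_order.order_trans)
    then obtain s where "l = r @ s" unfolding prefix_def by auto
    with l show "l \<in> (\<lambda>s. r @ s) ` ?S" by auto
  qed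
  then have "node_weight z T \<le> card ((\<lambda>s. r @ s) ` ?S)" unfolding node_weight_def
    by (intro card_mono finite_imageI finS)
  also have "\<dots> \<le> card ?S" by (rule card_image_le[OF finS])
  also have "\<dots> = 2 ^ (z - 1 - length r)"
    using card_lists_length_eq[of "UNIV::bool set" "z - 1 - length r"] by simp
  finally show ?thesis .
qed

lemma nw_split:
  assumes "T0 \<subseteq> sub (r@[False])" "T1 \<subseteq> sub (r@[True])"
  shows "node_weight z (T0 \<union> T1) = node_weight z T0 + node_weight z T1"
proof -
  let ?L = "\<lambda>T. {l \<in> tree_leaves z. \<exists>u\<in>T. prefix u l}"
  have eq: "?L (T0 \<union> T1) = ?L T0 \<union> ?L T1" by auto
  have "?L T0 \<subseteq> sub (r@[False])" using assms(1) unfolding sub_def tree_leaves_def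
    using prefix_order.order_trans by fastforce
  moreover have "?L T1 \<subseteq> sub (r@[True])" using assms(2) unfolding sub_def tree_leaves_def
    using prefix_order.order_trans by fastforce
  ultimately have "?L T0 \<inter> ?L T1 = {}" using sub_disj[of r] by blast
  moreover have "finite (?L T)" for T by (rule finite_subset[OF _ finite_leaves]) auto
  ultimately show ?thesis unfolding node_weight_def eq by (simp add: card_Un_disjoint)
qed

lemma ee_Suc: "ee (Suc d) = ee d + x ^ (2 ^ (z - 1 - d))"
  unfolding ee_def by simp

lemma ee_nonneg: "0 \<le> ee d" unfolding ee_def using x0 by (auto intro!: sum_nonneg)

lemma ee_le: "d < z \<Longrightarrow> ee d \<le> x ^ (2 ^ (z - 1 - d))"
proof (induction d)
  case 0 then show ?case using x0 by (simp add: ee_def)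
next
  case (Suc d)
  define k where "k = z - 1 - Suc d"
  have k: "z - 1 - d = Suc k" using Suc.prems unfolding k_def by auto
  define y where "y = x ^ (2 ^ k)"
  have y0: "0 \<le> y" using x0 unfolding y_def by simp
  have yx: "y \<le> x"
  proof -
    have "x ^ (2 ^ k) \<le> x ^ 1" using x0 x14 by (intro power_decreasing) auto
    then show ?thesis unfolding y_def by simp
  qed
  have sq: "x ^ (2 ^ (z - 1 - d)) = y * y" unfolding k y_def
    by (simp add: power_mult[symmetric] mult.commute power2_eq_square[symmetric])
  have "ee (Suc d) \<le> 2 * (y * y)" using Suc ee_Suc[of d] sq by simp
  also have "\<dots> \<le> y"
  proof -
    have "y * y \<le> (1/4) * y" by (rule mult_right_mono) (use yx x14 y0 in auto)
    then show ?thesis using y0 by linarith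
  qed
  finally show ?case unfolding y_def k_def .
qed

lemma main:
  "length r < z \<Longrightarrow> finite T \<Longrightarrow> T \<noteq> {} \<Longrightarrow> T \<subseteq> sub r \<Longrightarrow> antichain_nodes T \<Longrightarrow>
   prob (E r T) + ee (length r) \<le> 4 ^ card T / 2 * x ^ node_weight z T"
proof (induction "z - length r" arbitrary: r T rule: less_induct)
  case less
  define d where "d = length r"
  define q where "q = x ^ (2 ^ (z - 1 - d))"
  define W where "W = node_weight z T"
  have Wle: "W \<le> 2 ^ (z - 1 - d)" using nw_le less.prems unfolding W_def d_def by auto
  have qW: "q \<le> x ^ W" unfolding q_def using x0 x14 by (intro power_decreasing[OF Wle]) auto
  have eq: "ee d \<le> q" unfolding q_def d_def using ee_le less.prems(1) by auto
  have rT: "r \<in> tree_nodes z" using less.prems(1) unfolding tree_nodes_def by auto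
  have pA: "prob (A r) \<le> q" using pb[OF rT] unfolding A_def q_def d_def .
  have xW0: "0 \<le> x ^ W" using x0 by simp
  show ?case
  proof (cases "r \<in> T")
    case True
    have T1: "T = {r}"
    proof -
      have "v = r" if "v \<in> T" for v
      proof (rule ccontr)
        assume ne: "v \<noteq> r"
        have "prefix r v" using that less.prems(4) unfolding sub_def by auto
        moreover have "\<not> prefix r v"
          using less.prems(5)[unfolded antichain_nodes_def, rule_format, OF True that] ne by simp
        ultimately show False by simp
      qed
      then show ?thesis using True by blast
    qed
    have "E r T \<subseteq> A r"
    proof
      fix \<omega> assume "\<omega> \<in> E r T"
      then obtain u where "prefix r u" "prefix u r" "B u \<omega>" "\<omega> \<in> space M" unfolding T1 E_def by auto
      then show "\<omega> \<in> A r" unfolding A_def using prefix_order.antisym by blast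
    qed
    then have "prob (E r T) \<le> prob (A r)" by (rule finite_measure_mono) (rule A_ev[OF rT])
    then have "prob (E r T) + ee d \<le> 4 ^ card T / 2 * x ^ W" using pA eq qW T1 by simp
    then show ?thesis unfolding W_def d_def .
  next
    case False
    have lenT: "length r < length v" if "v \<in> T" for v
    proof -
      have "prefix r v" "r \<noteq> v" using that False less.prems(4) unfolding sub_def by auto
      then show ?thesis by (intro prefix_length_less) (simp add: strict_prefix_def)
    qed
    obtain v0 where v0: "v0 \<in> T" using less.prems(3) by auto
    have dz: "length r + 1 < z" using lenT[OF v0] less.prems(4) v0 unfolding sub_def by auto
    define TT where "TT b = {v\<in>T. prefix (r@[b]) v}" for b
    have T01: "T = TT False \<union> TT True"
    proof (rule set_eqI, rule iffI)
      fix v assume v: "v \<in> T"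
      then have "prefix r v" "r \<noteq> v" using False less.prems(4) unfolding sub_def by auto
      then obtain b s where "v = r @ b # s" unfolding prefix_def
        by (metis append.right_neutral neq_Nil_conv)
      then show "v \<in> TT False \<union> TT True" using v unfolding TT_def by (cases b) auto
    qed (auto simp: TT_def)
    have subb: "TT b \<subseteq> sub (r@[b])" for b using less.prems(4) unfolding TT_def sub_def by auto
    have finb: "finite (TT b)" for b using less.prems(2) unfolding TT_def by auto
    have antib: "antichain_nodes (TT b)" for b using less.prems(5) unfolding TT_def antichain_nodes_def by auto
    have IH: "TT b \<noteq> {} \<Longrightarrow> prob (E (r@[b]) (TT b)) + ee (Suc d) \<le> 4 ^ card (TT b) / 2 * x ^ node_weight z (TT b)" for b
      using less.hyps[of "r@[b]" "TT b"] less.prems(1) dz finb subb antib unfolding d_def by auto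
    have Ec: "E r T \<subseteq> A r \<union> (E (r@[False]) (TT False) \<inter> E (r@[True]) (TT True))"
      using E_child[OF subb[of False]] E_child[OF subb[of True]] E_mono[of "TT False" T r] E_mono[of "TT True" T r]
      T01 by blast
    have evb: "E (r@[b]) (TT b) \<in> events" for b using E_ev[OF finb subb] .
    have P: "prob (E r T) \<le> prob (A r) + prob (E (r@[False]) (TT False) \<inter> E (r@[True]) (TT True))"
    proof -
      have "prob (E r T) \<le> prob (A r \<union> (E (r@[False]) (TT False) \<inter> E (r@[True]) (TT True)))"
        using Ec A_ev[OF rT] evb by (intro finite_measure_mono) auto
      also have "\<dots> \<le> prob (A r) + prob (E (r@[False]) (TT False) \<inter> E (r@[True]) (TT True))"
        using A_ev[OF rT] evb by (intro measure_Un_le) auto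
      finally show ?thesis .
    qed
    have Esp: "E r' {} = space M" for r' unfolding E_def by auto
    have Esub: "E r' T' \<subseteq> space M" for r' T' unfolding E_def by auto
    have one_side: "prob (E r T) + ee d \<le> 4 ^ card T / 2 * x ^ W" if "TT (\<not> b) = {}" for b
    proof -
      have Tb: "T = TT b" using T01 that by (cases b) auto
      have "E (r@[False]) (TT False) \<inter> E (r@[True]) (TT True) = E (r@[b]) (TT b)"
      proof (cases b)
        case True
        then show ?thesis using that Esp[of "r@[False]"] Int_absorb1[OF Esub[of "r@[True]" "TT True"]] by simp
      next
        case False
        then show ?thesis using that Esp[of "r@[True]"] Int_absorb2[OF Esub[of "r@[False]" "TT False"]] by simp
      qed
      then have "prob (E r T) \<le> q + prob (E (r@[b]) (TT b))" using P pA by simp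
      moreover have "prob (E (r@[b]) (TT b)) + ee d + q \<le> 4 ^ card T / 2 * x ^ W"
        using IH[of b] Tb less.prems(3) ee_Suc[of d] unfolding W_def q_def by simp
      ultimately show ?thesis by simp
    qed
    show ?thesis
    proof (cases "TT False = {} \<or> TT True = {}")
      case True
      then show ?thesis using one_side[of True] one_side[of False] unfolding W_def d_def by auto
    next
      case False
      define P0 where "P0 = prob (E (r@[False]) (TT False))"
      define P1 where "P1 = prob (E (r@[True]) (TT True))"
      define k0 where "k0 = card (TT False)"
      define k1 where "k1 = card (TT True)"
      define W0 where "W0 = node_weight z (TT False)"
      define W1 where "W1 = node_weight z (TT True)"
      have disj: "TT False \<inter> TT True = {}" using subb[of False] subb[of True] sub_disj[of r] by blast
      have k: "card T = k0 + k1" unfolding k0_def k1_def using T01 disj finb by (metis card_Un_disjoint)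
      have Wsum: "W = W0 + W1" unfolding W_def W0_def W1_def using T01 nw_split[OF subb subb] by metis
      have k0p: "k0 \<ge> 1" "k1 \<ge> 1" using False finb unfolding k0_def k1_def
        by (auto simp: Suc_le_eq card_gt_0_iff)
      have P0b: "P0 \<le> 4 ^ k0 / 2 * x ^ W0" using IH[of False] False ee_nonneg[of "Suc d"]
        unfolding P0_def k0_def W0_def by auto
      have P1b: "P1 \<le> 4 ^ k1 / 2 * x ^ W1" using IH[of True] False ee_nonneg[of "Suc d"]
        unfolding P1_def k1_def W1_def by auto
      have prodeq: "prob (E (r@[False]) (TT False) \<inter> E (r@[True]) (TT True)) = P0 * P1"
      proof -
        have ne: "TT j \<noteq> {}" for j using False by (cases j) auto
        show ?thesis unfolding P0_def P1_def by (intro indep_children finb subb ne)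
      qed
      have "P0 * P1 \<le> (4 ^ k0 / 2 * x ^ W0) * (4 ^ k1 / 2 * x ^ W1)"
        by (rule mult_mono[OF P0b P1b]) (use x0 P0_def P1_def in auto)
      also have "\<dots> = 4 ^ card T / 4 * x ^ W" unfolding k Wsum by (simp add: power_add)
      finally have pp: "P0 * P1 \<le> 4 ^ card T / 4 * x ^ W" .
      have "(4::real) ^ 2 \<le> 4 ^ card T" using k k0p by (intro power_increasing) auto
      then have c: "2 * x ^ W \<le> 4 ^ card T / 4 * x ^ W" using xW0 by (intro mult_right_mono) auto
      have "prob (E r T) + ee d \<le> q + P0 * P1 + q" using P pA eq prodeq by simp
      also have "\<dots> \<le> 4 ^ card T / 2 * x ^ W" using pp qW c by simp
      finally show ?thesis unfolding d_def W_def .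
    qed
  qed
qed

end

lemma leaves_weight:
  assumes "T \<subseteq> tree_leaves z"
  shows "node_weight z T = card T"
proof -
  have "{l \<in> tree_leaves z. \<exists>u\<in>T. prefix u l} = T"
  proof (rule set_eqI, rule iffI)
    fix l assume "l \<in> {l \<in> tree_leaves z. \<exists>u\<in>T. prefix u l}"
    then obtain u where u: "u \<in> T" "prefix u l" "length l = z - 1" unfolding tree_leaves_def by auto
    then have "length u = length l" using assms unfolding tree_leaves_def by auto
    moreover obtain w where "l = u @ w" using u(2) unfolding prefix_def by auto
    ultimately have "u = l" by simp
    then show "l \<in> T" using u by simp
  next
    fix l assume "l \<in> T" then show "l \<in> {l \<in> tree_leaves z. \<exists>u\<in>T. prefix u l}"
      using assms by auto
  qed
  then show ?thesis unfolding node_weight_def by simp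
qed

theorem mainTheorem5:
  fixes M :: "'a measure" and B :: "bool list \<Rightarrow> 'a \<Rightarrow> bool"
    and z :: nat and \<delta> :: real and T :: "bool list set"
  assumes "prob_space M"
    and "z \<ge> 1"
    and "0 < \<delta>" and "\<delta> \<le> 1/2"
    and "prob_space.indep_vars M (\<lambda>_. count_space UNIV) B (tree_nodes z)"
    and "\<forall>v\<in>tree_nodes z. measure M {\<omega> \<in> space M. B v \<omega>} \<le> \<delta> ^ (2 ^ (z - length v))"
    and "T \<subseteq> tree_nodes z"
    and "antichain_nodes T"
  shows "measure M {\<omega> \<in> space M. \<forall>v\<in>T. Xval B \<omega> v \<in> {1, 2}}
           \<le> 4 * 4 ^ card T * \<delta> ^ (2 * node_weight z T)
       \<and> (T \<subseteq> tree_leaves z \<longrightarrow>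
         measure M {\<omega> \<in> space M. \<forall>v\<in>T. Xval B \<omega> v \<in> {1, 2}}
           \<le> (2 * \<delta>) ^ (2 * card T))"
proof -
  interpret P: prob_space M by (rule assms(1))
  have d2: "\<delta> ^ 2 \<le> 1/4"
  proof -
    have "\<delta> * \<delta> \<le> (1/2) * (1/2)" using assms(3,4) by (intro mult_mono) auto
    then show ?thesis by (simp add: power2_eq_square)
  qed
  interpret tsetup M B z "\<delta> ^ 2"
  proof
    show "0 \<le> \<delta> ^ 2" by simp
    show "\<delta> ^ 2 \<le> 1/4" by (rule d2)
    show "P.indep_vars (\<lambda>_. count_space UNIV) B (tree_nodes z)" by (rule assms(5))
    fix v assume v: "v \<in> tree_nodes z"
    then have "z - length v = Suc (z - 1 - length v)" unfolding tree_nodes_def by auto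
    then have "\<delta> ^ (2 ^ (z - length v)) = (\<delta> ^ 2) ^ (2 ^ (z - 1 - length v))"
      by (simp add: power_mult[symmetric])
    moreover have "P.prob {\<omega> \<in> space M. B v \<omega>} \<le> \<delta> ^ (2 ^ (z - length v))"
      using assms(6) v by blast
    ultimately show "P.prob {\<omega> \<in> space M. B v \<omega>} \<le> (\<delta> ^ 2) ^ 2 ^ (z - 1 - length v)"
      by metis
  qed
  have evq: "{\<omega> \<in> space M. \<forall>v\<in>T. Xval B \<omega> v \<in> {1, 2}} = E [] T"
    unfolding E_def Xval_def by (auto simp: strict_prefix_def)
  have subT: "T \<subseteq> sub []" using assms(7) unfolding sub_def tree_nodes_def by auto
  have finT: "finite T" using finite_sub subT by (rule finite_subset[rotated])
  show ?thesis
  proof (cases "T = {}")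
    case True
    have "E [] T = space M" unfolding True E_def by auto
    moreover have "node_weight z {} = 0" unfolding node_weight_def by simp
    ultimately show ?thesis unfolding evq True by (simp add: P.prob_space)
  next
    case False
    have m: "P.prob (E [] T) + ee 0 \<le> 4 ^ card T / 2 * (\<delta> ^ 2) ^ node_weight z T"
      using main[of "[]" T] assms(2,8) finT False subT by simp
    have pw: "(\<delta> ^ 2) ^ node_weight z T = \<delta> ^ (2 * node_weight z T)" by (simp add: power_mult)
    have m2: "P.prob (E [] T) \<le> 4 ^ card T / 2 * \<delta> ^ (2 * node_weight z T)"
      using m pw by (simp add: ee_def)
    have nn: "0 \<le> (4::real) ^ card T * \<delta> ^ (2 * node_weight z T)" using assms(3) by simp
    have part1: "P.prob (E [] T) \<le> 4 * 4 ^ card T * \<delta> ^ (2 * node_weight z T)"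
    proof -
      have e1: "4 ^ card T / 2 * \<delta> ^ (2 * node_weight z T) = (1/2) * ((4::real) ^ card T * \<delta> ^ (2 * node_weight z T))" by simp
      have e2: "4 * 4 ^ card T * \<delta> ^ (2 * node_weight z T) = 4 * ((4::real) ^ card T * \<delta> ^ (2 * node_weight z T))" by simp
      show ?thesis using m2 nn e1 e2 by linarith
    qed
    have part2: "P.prob (E [] T) \<le> (2 * \<delta>) ^ (2 * card T)" if "T \<subseteq> tree_leaves z"
    proof -
      have "(2 * \<delta>) ^ (2 * card T) = 4 ^ card T * \<delta> ^ (2 * card T)"
        by (simp add: power_mult power_mult_distrib)
      moreover have "4 ^ card T / 2 * \<delta> ^ (2 * card T) = (1/2) * ((4::real) ^ card T * \<delta> ^ (2 * card T))" by simp
      moreover have "0 \<le> (4::real) ^ card T * \<delta> ^ (2 * card T)" using assms(3) by simp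
      moreover have "P.prob (E [] T) \<le> 4 ^ card T / 2 * \<delta> ^ (2 * card T)"
        using m2 leaves_weight[OF that] by simp
      ultimately show ?thesis by linarith
    qed
    show ?thesis using part1 part2 unfolding evq by blast
  qed
qed

end
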